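(* Every $\epsilon_4$-segment expath $P$ from $u$ to $v$ in $G$ is an $\epsilon_4$-expath.
   Context: $G=(V,E)$ is an undirected graph with $n$ vertices and real edge weights in $[1,W]$; $|P|$ is the weighted length of a path $P$ and $P[a,b]$ its subpath between $a$ and $b$. Let $V=U_1,U_2,\dots,U_p$ be subsets of $V$; the level $l(v)$ of $v$ is the largest $l$ with $v\in U_l$, and $G_i$ is the subgraph of $G$ induced by the vertices of level $\le i$. Let $\epsilon_4$ be a real parameter with $0<\epsilon_4<\sqrt2-1$. $\epsilon_4$-segments: for a path $P=(u=v_0,\dots,v_\ell=v)$ and $1\le i,j<\ell$, $v_i,v_j$ lie in the same segment if either both $|P[u,v_i]|,|P[u,v_j]|\le|P|/2$ and $\lfloor\log_{1+\epsilon_4}|P[u,v_i]|\rfloor=\lfloor\log_{1+\epsilon_4}|P[u,v_j]|\rfloor$, or both $|P[v_i,v]|,|P[v_j,v]|<|P|/2$ and $\lfloor\log_{1+\epsilon_4}|P[v_i,v]|\rfloor=\lfloor\log_{1+\epsilon_4}|P[v_j,v]|\rfloor$; classes are contiguous subpaths and $u,v$ are in no segment. $P$ is an $\epsilon_4$-segment expath if every segment $P[x,y]$ is a shortest path in $G_i$ for some $1\le i\le p$. Let $B=\lceil\log_{1+\epsilon_4}(nW)\rceil$. $P$ (from $u$ to $v$) is an $\epsilon_4$-expath if it is the concatenation $e_0,P_0,e_1,P_1,\dots,e_{2B+1},P_{2B+1},e_{2B+2}$ where each $e_i$ is empty or a single edge and each $P_k=P[u_k,v_k]$ is either empty or a shortest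 path in $G_i$ for some $1\le i\le p$, and moreover $|P[u,v_k]|\le(1+\epsilon_4)^k$ whenever $k<B+1$ and $|P[u_k,v]|\le(1+\epsilon_4)^{2B+1-k}$ whenever $k\ge B+1$ (for nonempty $P_k$). *)

theory Defs
  imports Complex_Main
begin

definition wgraph :: "'v set \<Rightarrow> ('v \<times> 'v) set \<Rightarrow> ('v \<Rightarrow> 'v \<Rightarrow> real) \<Rightarrow> real \<Rightarrow> bool" where
  "wgraph V E w W \<longleftrightarrow> finite V \<and> E \<subseteq> V \<times> V \<and> sym E \<and> (\<forall>x. (x, x) \<notin> E) \<and>
     (\<forall>x y. (x, y) \<in> E \<longrightarrow> w x y = w y x \<and> 1 \<le> w x y \<and> w x y \<le> W)"

definition levels :: "'v set \<Rightarrow> (nat \<Rightarrow> 'v set) \<Rightarrow> nat \<Rightarrow> bool" where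
  "levels V U p \<longleftrightarrow> 1 \<le> p \<and> U 1 = V \<and> (\<forall>i\<in>{1..p}. U i \<subseteq> V)"

definition level :: "(nat \<Rightarrow> 'v set) \<Rightarrow> nat \<Rightarrow> 'v \<Rightarrow> nat" where
  "level U p v = Max {l. 1 \<le> l \<and> l \<le> p \<and> v \<in> U l}"

text \<open>Vertex set of G_i (induced subgraph on vertices of level at most i).\<close>
definition Gvert :: "'v set \<Rightarrow> (nat \<Rightarrow> 'v set) \<Rightarrow> nat \<Rightarrow> nat \<Rightarrow> 'v set" where
  "Gvert V U p i = {v \<in> V. level U p v \<le> i}"

definition is_walk_in :: "('v \<times> 'v) set \<Rightarrow> 'v set \<Rightarrow> 'v list \<Rightarrow> bool" where
  "is_walk_in E S P \<longleftrightarrow> P \<noteq> [] \<and> set P \<subseteq> S \<and> (\<forall>j. j + 1 < length P \<longrightarrow> (P ! j, P ! (j + 1)) \<in> E)"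

definition is_path_in :: "('v \<times> 'v) set \<Rightarrow> 'v set \<Rightarrow> 'v list \<Rightarrow> bool" where
  "is_path_in E S P \<longleftrightarrow> is_walk_in E S P \<and> distinct P"

definition plen :: "('v \<Rightarrow> 'v \<Rightarrow> real) \<Rightarrow> 'v list \<Rightarrow> real" where
  "plen w P = (\<Sum>j<length P - 1. w (P ! j) (P ! (j + 1)))"

definition shortest_in :: "('v \<times> 'v) set \<Rightarrow> ('v \<Rightarrow> 'v \<Rightarrow> real) \<Rightarrow> 'v set \<Rightarrow> 'v list \<Rightarrow> bool" where
  "shortest_in E w S P \<longleftrightarrow> is_walk_in E S P \<and>
     (\<forall>Q. is_walk_in E S Q \<and> hd Q = hd P \<and> last Q = last P \<longrightarrow> plen w P \<le> plen w Q)"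

text \<open>Subpath P[v_i, v_j] for i \<le> j (vertex indices).\<close>
definition subpath :: "'v list \<Rightarrow> nat \<Rightarrow> nat \<Rightarrow> 'v list" where
  "subpath P i j = take (j - i + 1) (drop i P)"

definition same_seg :: "('v \<Rightarrow> 'v \<Rightarrow> real) \<Rightarrow> real \<Rightarrow> 'v list \<Rightarrow> nat \<Rightarrow> nat \<Rightarrow> bool" where
  "same_seg w eps P i j \<longleftrightarrow>
     (let l = length P - 1; L = plen w P;
          du = (\<lambda>k. plen w (subpath P 0 k)); dv = (\<lambda>k. plen w (subpath P k l))
      in 1 \<le> i \<and> i < l \<and> 1 \<le> j \<and> j < l \<and>
        ((du i \<le> L / 2 \<and> du j \<le> L / 2 \<and>
            \<lfloor>log (1 + eps) (du i)\<rfloor> = \<lfloor>log (1 + eps) (du j)\<rfloor>) \<or>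
         (dv i < L / 2 \<and> dv j < L / 2 \<and>
            \<lfloor>log (1 + eps) (dv i)\<rfloor> = \<lfloor>log (1 + eps) (dv j)\<rfloor>)))"

definition is_segment :: "('v \<Rightarrow> 'v \<Rightarrow> real) \<Rightarrow> real \<Rightarrow> 'v list \<Rightarrow> nat \<Rightarrow> nat \<Rightarrow> bool" where
  "is_segment w eps P a b \<longleftrightarrow> 1 \<le> a \<and> a \<le> b \<and> b < length P - 1 \<and>
     {k. same_seg w eps P a k} = {a..b}"

definition segment_expath ::
  "'v set \<Rightarrow> ('v \<times> 'v) set \<Rightarrow> ('v \<Rightarrow> 'v \<Rightarrow> real) \<Rightarrow> (nat \<Rightarrow> 'v set) \<Rightarrow> nat \<Rightarrow> real \<Rightarrow> 'v list \<Rightarrow> 'v \<Rightarrow> 'v \<Rightarrow> bool" where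
  "segment_expath V E w U p eps P u v \<longleftrightarrow>
     is_path_in E V P \<and> hd P = u \<and> last P = v \<and>
     (\<forall>a b. is_segment w eps P a b \<longrightarrow>
        (\<exists>i\<in>{1..p}. shortest_in E w (Gvert V U p i) (subpath P a b)))"

definition Bnum :: "real \<Rightarrow> nat \<Rightarrow> real \<Rightarrow> nat" where
  "Bnum eps n W = nat \<lceil>log (1 + eps) (real n * W)\<rceil>"

text \<open>Expath: P = e_0,P_0,e_1,...,e_{2B+1},P_{2B+1},e_{2B+2}, where the (nonempty) piece P_k is
  the subpath P[v_{a k}, v_{b k}] (a k < b k) and a gap of at most one edge (the e_i) separates
  consecutive pieces.  A piece with a k = b k is the empty piece.\<close>
definition expath ::
  "'v set \<Rightarrow> ('v \<times> 'v) set \<Rightarrow> ('v \<Rightarrow> 'v \<Rightarrow> real) \<Rightarrow> real \<Rightarrow> (nat \<Rightarrow> 'v set) \<Rightarrow> nat \<Rightarrow> real \<Rightarrow> 'v list \<Rightarrow> 'v \<Rightarrow> 'v \<Rightarrow> bool" where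
  "expath V E w W U p eps P u v \<longleftrightarrow>
     is_path_in E V P \<and> hd P = u \<and> last P = v \<and>
     (let B = Bnum eps (card V) W; l = length P - 1 in
      \<exists>a b :: nat \<Rightarrow> nat.
        a 0 \<le> 1 \<and>
        (\<forall>k\<le>2*B+1. a k \<le> b k) \<and>
        (\<forall>k<2*B+1. b k \<le> a (k + 1) \<and> a (k + 1) \<le> b k + 1) \<and>
        b (2*B+1) \<le> l \<and> l \<le> b (2*B+1) + 1 \<and>
        (\<forall>k\<le>2*B+1. a k < b k \<longrightarrow>
           (\<exists>i\<in>{1..p}. shortest_in E w (Gvert V U p i) (subpath P (a k) (b k))) \<and>
           (k < B + 1 \<longrightarrow> plen w (subpath P 0 (b k)) \<le> (1 + eps) ^ k) \<and>
           (B + 1 \<le> k \<longrightarrow> plen w (subpath P (a k) l) \<le> (1 + eps) ^ (2*B+1-k))))"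

end

theory Submission
  imports Defs
begin

lemma plen_subpath:
  assumes "i \<le> j" "j < length P"
  shows "plen w (subpath P i j) = (\<Sum>t\<in>{i..<j}. w (P!t) (P!(t+1)))"
proof -
  have len: "length (subpath P i j) = j - i + 1" using assms by (simp add: subpath_def)
  have nth: "\<And>s. s \<le> j - i \<Longrightarrow> subpath P i j ! s = P ! (i + s)"
    using assms by (simp add: subpath_def)
  have "plen w (subpath P i j) = (\<Sum>s<j-i. w (P!(i+s)) (P!(i+s+1)))"
    unfolding plen_def len using nth by (intro sum.cong) auto
  also have "\<dots> = (\<Sum>t\<in>{i..<j}. w (P!t) (P!(t+1)))"
  proof -
    have "(\<Sum>t\<in>{i..<j}. w (P!t) (P!(t+1))) = (\<Sum>t\<in>{0+i..<(j-i)+i}. w (P!t) (P!(t+1)))"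
      using assms by simp
    also have "\<dots> = (\<Sum>s\<in>{0..<j-i}. w (P!(s+i)) (P!(s+i+1)))"
      by (rule sum.shift_bounds_nat_ivl)
    finally show ?thesis by (simp add: lessThan_atLeast0 add.commute)
  qed
  finally show ?thesis .
qed

lemma log_floor_facts:
  fixes bs x N :: real
  assumes bs1: "1 < bs" and x: "1 \<le> x" "x < N"
  shows "nat \<lfloor>log bs x\<rfloor> < nat \<lceil>log bs N\<rceil> \<and> x < bs ^ (nat \<lfloor>log bs x\<rfloor> + 1) \<and> 0 \<le> \<lfloor>log bs x\<rfloor>"
proof -
  have l0: "0 \<le> log bs x" using bs1 x by simp
  have lxN: "log bs x < log bs N" using bs1 x by simp
  moreover have "real_of_int \<lfloor>log bs x\<rfloor> \<le> log bs x" by (rule of_int_floor_le)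
  moreover have "log bs N \<le> real_of_int \<lceil>log bs N\<rceil>" by (rule le_of_int_ceiling)
  ultimately have "real_of_int \<lfloor>log bs x\<rfloor> < real_of_int \<lceil>log bs N\<rceil>" by linarith
  hence fc: "\<lfloor>log bs x\<rfloor> < \<lceil>log bs N\<rceil>" by simp
  have f0: "0 \<le> \<lfloor>log bs x\<rfloor>" using l0 by simp
  have "x = bs powr (log bs x)" using bs1 x by simp
  also have "\<dots> < bs powr (real (nat \<lfloor>log bs x\<rfloor> + 1))"
  proof (rule powr_less_mono)
    have "log bs x < real_of_int \<lfloor>log bs x\<rfloor> + 1" by (rule real_of_int_floor_add_one_gt)
    thus "log bs x < real (nat \<lfloor>log bs x\<rfloor> + 1)" using f0 by (simp add: add.commute)
  qed (use bs1 in auto)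
  also have "\<dots> = bs ^ (nat \<lfloor>log bs x\<rfloor> + 1)" using bs1 by (subst powr_realpow[symmetric]) auto
  finally show ?thesis using fc f0 l0 lxN by (simp add: nat_less_eq_zless)
qed

theorem lemma4p5:
  fixes V :: "'v set" and E :: "('v \<times> 'v) set" and w :: "'v \<Rightarrow> 'v \<Rightarrow> real"
    and W :: real and U :: "nat \<Rightarrow> 'v set" and p :: nat and eps :: real
    and P :: "'v list" and u v :: 'v
  assumes "wgraph V E w W"
    and "levels V U p"
    and "0 < eps" and "eps < sqrt 2 - 1"
    and "segment_expath V E w U p eps P u v"
  shows "expath V E w W U p eps P u v"
proof -
  have wgf: "finite V" and wge: "\<And>x y. (x,y) \<in> E \<Longrightarrow> 1 \<le> w x y \<and> w x y \<le> W"
    using assms(1) unfolding wgraph_def by auto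
  from assms(5) have pth: "is_path_in E V P" and hu: "hd P = u" and hv: "last P = v"
    and seg: "\<And>a b. is_segment w eps P a b \<Longrightarrow> \<exists>i\<in>{1..p}. shortest_in E w (Gvert V U p i) (subpath P a b)"
    unfolding segment_expath_def by auto
  from pth have Pne: "P \<noteq> []" and Pset: "set P \<subseteq> V"
    and Pedge: "\<And>j. j+1 < length P \<Longrightarrow> (P!j, P!(j+1)) \<in> E" and Pdist: "distinct P"
    unfolding is_path_in_def is_walk_in_def by auto
  define l where "l = length P - 1"
  have lenP: "length P = l + 1" using Pne l_def by (cases P) auto
  define f where "f t = w (P!t) (P!(t+1))" for t
  define S where "S i j = (\<Sum>t\<in>{i..<j}. f t)" for i j
  define L where "L = S 0 l"
  define bs where "bs = 1 + eps"
  define N where "N = real (card V) * W"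
  define B where "B = Bnum eps (card V) W"
  have B_eq: "B = nat \<lceil>log bs N\<rceil>" unfolding B_def Bnum_def bs_def N_def ..
  have bs1: "1 < bs" using assms(3) bs_def by simp
  have f_bd: "\<And>t. t < l \<Longrightarrow> 1 \<le> f t \<and> f t \<le> W" using Pedge wge lenP f_def by auto
  have S_add: "\<And>i j k. i \<le> j \<Longrightarrow> j \<le> k \<Longrightarrow> S i k = S i j + S j k"
    unfolding S_def by (simp add: sum.atLeastLessThan_concat)
  have S_ge: "real (j - i) \<le> S i j" if "i \<le> j" "j \<le> l" for i j
  proof -
    have "(\<Sum>t\<in>{i..<j}. (1::real)) \<le> (\<Sum>t\<in>{i..<j}. f t)"
      by (rule sum_mono) (use f_bd that in auto)
    thus ?thesis unfolding S_def by simp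
  qed
  have S_le: "S i j \<le> real (j - i) * W" if "i \<le> j" "j \<le> l" for i j
  proof -
    have "(\<Sum>t\<in>{i..<j}. f t) \<le> (\<Sum>t\<in>{i..<j}. W)"
      by (rule sum_mono) (use f_bd that in auto)
    thus ?thesis unfolding S_def by simp
  qed
  have cardV: "l + 1 \<le> card V" using distinct_card[OF Pdist] card_mono[OF wgf Pset] lenP by simp
  have W1: "1 \<le> W" if "1 \<le> l" using f_bd[of 0] that by auto
  have S_ltN: "S i j < N" if "1 \<le> l" "i \<le> j" "j \<le> l" for i j
  proof -
    have "S 0 l = S 0 i + S i j + S j l" using S_add[of 0 i l] S_add[of i j l] that by simp
    moreover have "0 \<le> S 0 i" "0 \<le> S j l" using S_ge[of 0 i] S_ge[of j l] that by auto
    moreover have "S 0 l \<le> real l * W" using S_le[of 0 l] by simp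
    moreover have "real l * W < real (card V) * W"
      using W1 that cardV by (intro mult_strict_right_mono) auto
    ultimately show ?thesis unfolding N_def by linarith
  qed
  have LG: "nat \<lfloor>log bs x\<rfloor> < B \<and> x < bs ^ (nat \<lfloor>log bs x\<rfloor> + 1) \<and> 0 \<le> \<lfloor>log bs x\<rfloor>"
    if "1 \<le> x" "x < N" for x
    using log_floor_facts[OF bs1 that] B_eq by simp
  have du: "plen w (subpath P 0 k) = S 0 k" if "k \<le> l" for k
    using plen_subpath[of 0 k P w] that lenP unfolding S_def f_def by simp
  have dv: "plen w (subpath P k l) = S k l" if "k \<le> l" for k
    using plen_subpath[of k l P w] that lenP unfolding S_def f_def by simp
  have Lp: "plen w P = L" by (simp add: plen_def L_def S_def f_def l_def lessThan_atLeast0)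
  have Ssum: "S 0 i + S i l = L" if "i \<le> l" for i using S_add[of 0 i l] that L_def by simp
  have in1: "1 \<le> S 0 i \<and> S 0 i < N" if "1 \<le> i" "i < l" for i
    using S_ge[of 0 i] S_ltN[of 0 i] that by auto
  have in2: "1 \<le> S i l \<and> S i l < N" if "1 \<le> i" "i < l" for i
    using S_ge[of i l] S_ltN[of i l] that by auto
  define c where "c i = (if i = 0 then 0 else if l \<le> i then 2*B+1 else
      if S 0 i \<le> L/2 then nat \<lfloor>log bs (S 0 i)\<rfloor> + 1 else 2*B - nat \<lfloor>log bs (S i l)\<rfloor>)" for i
  have cF: "1 \<le> c i \<and> c i \<le> B \<and> S 0 i < bs ^ c i" if "1 \<le> i" "i < l" "S 0 i \<le> L/2" for i
    using LG[of "S 0 i"] in1[OF that(1,2)] that unfolding c_def by auto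
  have cS: "B+1 \<le> c i \<and> c i \<le> 2*B \<and> S i l < bs ^ (2*B+1 - c i)" if "1 \<le> i" "i < l" "\<not> S 0 i \<le> L/2" for i
  proof -
    have h: "nat \<lfloor>log bs (S i l)\<rfloor> < B" "S i l < bs ^ (nat \<lfloor>log bs (S i l)\<rfloor> + 1)"
      using LG[of "S i l"] in2[OF that(1,2)] by auto
    have ci: "c i = 2*B - nat \<lfloor>log bs (S i l)\<rfloor>" using that unfolding c_def by auto
    have "2*B+1 - c i = nat \<lfloor>log bs (S i l)\<rfloor> + 1" using ci h(1) by simp
    thus ?thesis using ci h by auto
  qed
  have c0: "c 0 = 0" unfolding c_def by simp
  have cl: "c i = 2*B+1" if "l \<le> i" "1 \<le> i" for i using that unfolding c_def by simp
  have c_le: "c i \<le> 2*B+1" for i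
  proof -
    consider "i = 0" | "l \<le> i" "1 \<le> i" | "1 \<le> i" "i < l" "S 0 i \<le> L/2" | "1 \<le> i" "i < l" "\<not> S 0 i \<le> L/2"
      by linarith
    thus ?thesis using c0 cl cF cS by cases fastforce+
  qed
  have c_mono: "c i \<le> c j" if ij: "i \<le> j" "j \<le> l" for i j
  proof -
    consider "i = 0" | "l \<le> j" "1 \<le> j" | "1 \<le> i" "j < l" using ij by (cases "i=0"; cases "l \<le> j") auto
    then show ?thesis
    proof cases
      case 1 thus ?thesis using c0 by simp
    next
      case 2 thus ?thesis using cl c_le by simp
    next
      case 3
      have sij: "S 0 i \<le> S 0 j" "S j l \<le> S i l"
        using S_add[of 0 i j] S_add[of i j l] S_ge[of i j] ij 3 by auto
      have i1: "1 \<le> S 0 i" "1 \<le> S j l" using in1[of i] in2[of j] 3 ij by auto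
      consider "S 0 j \<le> L/2" | "\<not> S 0 j \<le> L/2" "S 0 i \<le> L/2" | "\<not> S 0 i \<le> L/2" by linarith
      then show ?thesis
      proof cases
        case 1
        hence "S 0 i \<le> L/2" using sij by linarith
        moreover have "log bs (S 0 i) \<le> log bs (S 0 j)" using sij i1 bs1 by simp
        ultimately show ?thesis using 1 3 ij unfolding c_def by (simp add: floor_mono nat_mono)
      next
        case 2 thus ?thesis using cF[of i] cS[of j] 3 ij by auto
      next
        case c3: 3
        hence "\<not> S 0 j \<le> L/2" using sij by linarith
        moreover have "log bs (S j l) \<le> log bs (S i l)" using sij i1 bs1 by simp
        ultimately show ?thesis using c3 3 ij unfolding c_def by (simp add: floor_mono nat_mono diff_le_mono2)
      qed
    qed
  qed
  have ss: "same_seg w eps P i j \<longleftrightarrow> (1 \<le> i \<and> i < l \<and> 1 \<le> j \<and> j < l \<and> c i = c j)" for i j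
  proof (cases "1 \<le> i \<and> i < l \<and> 1 \<le> j \<and> j < l")
    case False thus ?thesis unfolding same_seg_def Let_def l_def by auto
  next
    case True
    have q: "plen w (subpath P 0 i) = S 0 i" "plen w (subpath P 0 j) = S 0 j"
      "plen w (subpath P i l) = S i l" "plen w (subpath P j l) = S j l"
      using du[of i] du[of j] dv[of i] dv[of j] True by auto
    have e: "same_seg w eps P i j \<longleftrightarrow> ((S 0 i \<le> L/2 \<and> S 0 j \<le> L/2 \<and> \<lfloor>log bs (S 0 i)\<rfloor> = \<lfloor>log bs (S 0 j)\<rfloor>)
       \<or> (S i l < L/2 \<and> S j l < L/2 \<and> \<lfloor>log bs (S i l)\<rfloor> = \<lfloor>log bs (S j l)\<rfloor>))"
      unfolding same_seg_def Let_def l_def[symmetric] Lp bs_def[symmetric] q using True by simp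
    have si: "S i l = L - S 0 i" "S j l = L - S 0 j" using Ssum[of i] Ssum[of j] True by auto
    have g: "0 \<le> \<lfloor>log bs (S 0 i)\<rfloor>" "0 \<le> \<lfloor>log bs (S 0 j)\<rfloor>"
      "0 \<le> \<lfloor>log bs (S i l)\<rfloor>" "0 \<le> \<lfloor>log bs (S j l)\<rfloor>"
      "nat \<lfloor>log bs (S i l)\<rfloor> < B" "nat \<lfloor>log bs (S j l)\<rfloor> < B"
      using LG[of "S 0 i"] LG[of "S 0 j"] LG[of "S i l"] LG[of "S j l"] in1[of i] in1[of j] in2[of i] in2[of j] True
      by auto
    consider "S 0 i \<le> L/2" "S 0 j \<le> L/2" | "S 0 i \<le> L/2" "\<not> S 0 j \<le> L/2"
      | "\<not> S 0 i \<le> L/2" "S 0 j \<le> L/2" | "\<not> S 0 i \<le> L/2" "\<not> S 0 j \<le> L/2" by blast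
    then show ?thesis
    proof cases
      case 1
      have "c i = c j \<longleftrightarrow> \<lfloor>log bs (S 0 i)\<rfloor> = \<lfloor>log bs (S 0 j)\<rfloor>"
        using 1 True g unfolding c_def by (auto simp: nat_eq_iff)
      thus ?thesis using e si 1 True by auto
    next
      case 2 thus ?thesis using e si cF[of i] cS[of j] True by auto
    next
      case 3 thus ?thesis using e si cS[of i] cF[of j] True by auto
    next
      case 4
      have ci: "c i = 2*B - nat \<lfloor>log bs (S i l)\<rfloor>" "c j = 2*B - nat \<lfloor>log bs (S j l)\<rfloor>"
        using 4 True unfolding c_def by auto
      have "c i = c j \<longleftrightarrow> nat \<lfloor>log bs (S i l)\<rfloor> = nat \<lfloor>log bs (S j l)\<rfloor>"
        unfolding ci using g(5,6) by arith
      also have "\<dots> \<longleftrightarrow> \<lfloor>log bs (S i l)\<rfloor> = \<lfloor>log bs (S j l)\<rfloor>" using g(3,4) eq_nat_nat_iff by blast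
      finally have "c i = c j \<longleftrightarrow> \<lfloor>log bs (S i l)\<rfloor> = \<lfloor>log bs (S j l)\<rfloor>" .
      thus ?thesis using e si 4 True by auto
    qed
  qed
  define bb where "bb k = Max {i. i \<le> l \<and> c i \<le> k}" for k
  define aa where "aa k = (if \<exists>i\<le>l. c i = k then Min {i. i \<le> l \<and> c i = k} else bb k)" for k
  have bbP: "bb k \<le> l \<and> c (bb k) \<le> k" for k
  proof -
    have "finite {i. i \<le> l \<and> c i \<le> k}" by simp
    moreover have "0 \<in> {i. i \<le> l \<and> c i \<le> k}" using c0 by simp
    ultimately have "bb k \<in> {i. i \<le> l \<and> c i \<le> k}" unfolding bb_def by (intro Max_in) auto
    thus ?thesis by simp
  qed
  have bbM: "i \<le> bb k" if "i \<le> l" "c i \<le> k" for i k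
    unfolding bb_def using that by (intro Max_ge) auto
  have aaP: "aa k \<le> l \<and> c (aa k) = k" if "\<exists>i\<le>l. c i = k" for k
  proof -
    have "finite {i. i \<le> l \<and> c i = k}" by simp
    hence "Min {i. i \<le> l \<and> c i = k} \<in> {i. i \<le> l \<and> c i = k}" using that by (intro Min_in) auto
    thus ?thesis using that unfolding aa_def by simp
  qed
  have aaM: "aa k \<le> i" if "i \<le> l" "c i = k" for i k
  proof -
    have "Min {i. i \<le> l \<and> c i = k} \<le> i" using that by (intro Min_le) auto
    thus ?thesis using that unfolding aa_def by auto
  qed
  have aaN: "aa k = bb k" if "\<not> (\<exists>i\<le>l. c i = k)" for k
    unfolding aa_def using that by (rule if_not_P)
  have clt: "i < j" if "i \<le> l" "j \<le> l" "c i < c j" for i j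
    using c_mono[of j i] that by linarith
  have c_pos: "1 \<le> c i" if "1 \<le> i" for i
    using that cF[of i] cS[of i] unfolding c_def by (cases "l \<le> i") auto
  have c_inner: "c i \<le> 2*B" if "1 \<le> i" "i < l" for i
    using that cF[of i] cS[of i] by (cases "S 0 i \<le> L/2") auto
  have goal: "\<exists>a b::nat\<Rightarrow>nat. a 0 \<le> 1 \<and> (\<forall>k\<le>2*B+1. a k \<le> b k) \<and>
      (\<forall>k<2*B+1. b k \<le> a (k+1) \<and> a (k+1) \<le> b k + 1) \<and> b (2*B+1) \<le> l \<and> l \<le> b (2*B+1) + 1 \<and>
      (\<forall>k\<le>2*B+1. a k < b k \<longrightarrow>
         (\<exists>i\<in>{1..p}. shortest_in E w (Gvert V U p i) (subpath P (a k) (b k))) \<and>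
         (k < B + 1 \<longrightarrow> plen w (subpath P 0 (b k)) \<le> (1 + eps) ^ k) \<and>
         (B + 1 \<le> k \<longrightarrow> plen w (subpath P (a k) l) \<le> (1 + eps) ^ (2*B+1-k)))"
  proof (rule exI[of _ aa], rule exI[of _ bb], intro conjI allI impI)
    show "aa 0 \<le> 1" using aaM[of 0 0] c0 by simp
  next
    fix k show "aa k \<le> bb k"
    proof (cases "\<exists>i\<le>l. c i = k")
      case True thus ?thesis using aaP[OF True] bbM[of "aa k" k] by simp
    qed (use aaN in auto)
  next
    fix k show "bb k \<le> aa (k+1)"
    proof (cases "\<exists>i\<le>l. c i = k+1")
      case True thus ?thesis using aaP[OF True] bbP[of k] clt[of "bb k" "aa (k+1)"] by simp
    next
      case False thus ?thesis using bbP[of k] bbM[of "bb k" "k+1"] aaN[OF False] by simp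
    qed
  next
    fix k show "aa (k+1) \<le> bb k + 1"
    proof (cases "\<exists>i\<le>l. c i = k+1")
      case True
      define m where "m = aa (k+1)"
      have m: "m \<le> l" "c m = k+1" using aaP[OF True] m_def by auto
      have m0: "m \<noteq> 0"
      proof
        assume "m = 0" hence "c m = 0" using c0 by simp
        thus False using m(2) by simp
      qed
      have "c (m-1) \<le> c m" using c_mono[of "m-1" m] m by simp
      moreover have "c (m-1) \<noteq> k+1" using aaM[of "m-1" "k+1"] m m0 m_def by fastforce
      ultimately have "c (m-1) \<le> k" using m by simp
      hence "m - 1 \<le> bb k" using bbM[of "m-1" k] m by simp
      thus ?thesis using m_def by simp
    next
      case False
      have "c (bb (k+1)) \<le> k" using bbP[of "k+1"] False by fastforce
      hence "bb (k+1) \<le> bb k" using bbM bbP by blast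
      thus ?thesis using aaN[OF False] by simp
    qed
  next
    show "bb (2*B+1) \<le> l" using bbP by blast
  next
    show "l \<le> bb (2*B+1) + 1" using bbM[of l "2*B+1"] c_le by simp
  next
    fix k assume k: "k \<le> 2*B+1" and ab: "aa k < bb k"
    have ex: "\<exists>i\<le>l. c i = k" using ab aaN[of k] by (cases "\<exists>i\<le>l. c i = k") auto
    define a where "a = aa k"
    define b where "b = bb k"
    have a: "a \<le> l" "c a = k" using aaP[OF ex] a_def by auto
    have b: "b \<le> l" "c b \<le> k" using bbP b_def by auto
    have ab': "a < b" using ab a_def b_def by simp
    have cb: "c b = k" using c_mono[of a b] ab' a b by simp
    have a1: "1 \<le> a"
    proof (rule ccontr)
      assume "\<not> 1 \<le> a" hence "a = 0" by simp
      hence "k = 0" using a c0 by simp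
      thus False using c_pos[of b] cb ab' by simp
    qed
    have bl: "b < l"
    proof (rule ccontr)
      assume "\<not> b < l" hence "b = l" using b by simp
      hence "k = 2*B+1" using cb cl[of b] ab' by simp
      thus False using c_inner[of a] a a1 ab' \<open>b = l\<close> by simp
    qed
    have "is_segment w eps P a b"
      unfolding is_segment_def
    proof (intro conjI)
      show "1 \<le> a" "a \<le> b" "b < length P - 1" using a1 ab' bl l_def by auto
      show "{k'. same_seg w eps P a k'} = {a..b}"
      proof (intro set_eqI iffI)
        fix x assume "x \<in> {k'. same_seg w eps P a k'}"
        hence x: "1 \<le> x" "x < l" "c x = k" using ss[of a x] a by auto
        show "x \<in> {a..b}" using aaM[of x k] bbM[of x k] x a_def b_def by simp
      next
        fix x assume "x \<in> {a..b}"
        hence x: "a \<le> x" "x \<le> b" by auto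
        have "c a \<le> c x" "c x \<le> c b" using c_mono x b by (metis le_trans)+
        hence "c x = c a" using a cb by simp
        thus "x \<in> {k'. same_seg w eps P a k'}" using ss[of a x] x a1 ab' bl by simp
      qed
    qed
    thus "\<exists>i\<in>{1..p}. shortest_in E w (Gvert V U p i) (subpath P (aa k) (bb k))"
      using seg a_def b_def by simp
    show "k < B + 1 \<Longrightarrow> plen w (subpath P 0 (bb k)) \<le> (1 + eps) ^ k"
    proof -
      assume kB: "k < B + 1"
      have "S 0 b \<le> L/2" using cS[of b] cb kB a1 ab' bl by (cases "S 0 b \<le> L/2") auto
      hence "S 0 b < bs ^ k" using cF[of b] cb a1 ab' bl by simp
      thus ?thesis using du[of b] b b_def bs_def by simp
    qed
    show "B + 1 \<le> k \<Longrightarrow> plen w (subpath P (aa k) l) \<le> (1 + eps) ^ (2*B+1-k)"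
    proof -
      assume kB: "B + 1 \<le> k"
      have "\<not> S 0 a \<le> L/2" using cF[of a] a kB a1 ab' bl by auto
      hence "S a l < bs ^ (2*B+1-k)" using cS[of a] a a1 ab' bl by simp
      thus ?thesis using dv[of a] a a_def bs_def by simp
    qed
  qed
  show ?thesis using goal pth hu hv
    unfolding expath_def Let_def B_def[symmetric] l_def[symmetric] by simp
qed

end
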